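(* Let $a,b,c,a',b',c',d,e,f,g$ be real numbers and let $P=P(a,b,c,a',b',c',d,e,f,g)$ be the $6\times6$ Hermitian matrix defined in the context. Then $P$ is positive semidefinite of rank $2$ if and only if $$a^2+b^2+c^2=1,\quad a'^2+b'^2+c'^2=1,\quad d=aa'+bb'+cc',\quad e=b'c-bc',\quad f=ac'-a'c,\quad g=a'b-ab'.$$ Moreover, in that case $P=QQ^{\mathrm H}$, where $Q$ is the $6\times 2$ matrix $$Q=\begin{pmatrix}1&0\\0&1\\ ci & b+ai\\ -b+ai & -ci\\ c'i & b'+a'i\\ -b'+a'i & -c'i\end{pmatrix}.$$
   Context: $i=\sqrt{-1}$, $\cdot^{\mathrm H}$ is the conjugate transpose. For real $a,b,c,a',b',c',d,e,f,g$, define the $6\times 6$ complex matrix $$P(a,b,c,a',b',c',d,e,f,g)=\begin{pmatrix} 1&0&-ci&-b-ai&-c'i&-b'-a'i\\ 0&1&b-ai&ci&b'-a'i&c'i\\ ci&b+ai&1&0&d-gi&-f-ei\\ -b+ai&-ci&0&1&f-ei&d+gi\\ c'i&b'+a'i&d+gi&f+ei&1&0\\ -b'+a'i&-c'i&-f+ei&d-gi&0&1 \end{pmatrix},$$ which is Hermitian. *)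

theory Defs
  imports "Jordan_Normal_Form.Schur_Decomposition" "Jordan_Normal_Form.DL_Rank"
begin

definition psd_mat :: "complex mat \<Rightarrow> bool" where
  "psd_mat A \<longleftrightarrow> A \<in> carrier_mat (dim_row A) (dim_row A) \<and> mat_adjoint A = A \<and>
     (\<forall>x \<in> carrier_vec (dim_row A). conjugate x \<bullet> (A *\<^sub>v x) \<ge> 0)"

definition Pmat :: "real \<Rightarrow> real \<Rightarrow> real \<Rightarrow> real \<Rightarrow> real \<Rightarrow> real \<Rightarrow> real \<Rightarrow> real \<Rightarrow> real \<Rightarrow> real \<Rightarrow> complex mat" where
  "Pmat a b c a' b' c' d e f g = mat_of_rows_list 6 [
    [1, 0, -c*\<i>, -b-a*\<i>, -c'*\<i>, -b'-a'*\<i>],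
    [0, 1, b-a*\<i>, c*\<i>, b'-a'*\<i>, c'*\<i>],
    [c*\<i>, b+a*\<i>, 1, 0, d-g*\<i>, -f-e*\<i>],
    [-b+a*\<i>, -c*\<i>, 0, 1, f-e*\<i>, d+g*\<i>],
    [c'*\<i>, b'+a'*\<i>, d+g*\<i>, f+e*\<i>, 1, 0],
    [-b'+a'*\<i>, -c'*\<i>, -f+e*\<i>, d-g*\<i>, 0, 1]]"

definition Qmat :: "real \<Rightarrow> real \<Rightarrow> real \<Rightarrow> real \<Rightarrow> real \<Rightarrow> real \<Rightarrow> complex mat" where
  "Qmat a b c a' b' c' = mat_of_rows_list 2 [
    [1, 0],
    [0, 1],
    [c*\<i>, b+a*\<i>],
    [-b+a*\<i>, -c*\<i>],
    [c'*\<i>, b'+a'*\<i>],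
    [-b'+a'*\<i>, -c'*\<i>]]"

end

theory Submission
  imports Defs "Jordan_Normal_Form.DL_Rank_Submatrix"
begin
lemma adj_idx: "i < dim_col A \<Longrightarrow> j < dim_row A \<Longrightarrow> mat_adjoint A $$ (i,j) = conjugate (A $$ (j,i))"
  "dim_row (mat_adjoint A) = dim_col A" "dim_col (mat_adjoint A) = dim_row A"
  by (auto simp: mat_adjoint_def mat_of_rows_def)
lemma P_idx: "i < 6 \<Longrightarrow> j < 6 \<Longrightarrow> Pmat a b c a' b' c' d e f g $$ (i,j) = [
    [1, 0, -c*\<i>, -b-a*\<i>, -c'*\<i>, -b'-a'*\<i>],
    [0, 1, b-a*\<i>, c*\<i>, b'-a'*\<i>, c'*\<i>],
    [c*\<i>, b+a*\<i>, 1, 0, d-g*\<i>, -f-e*\<i>],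
    [-b+a*\<i>, -c*\<i>, 0, 1, f-e*\<i>, d+g*\<i>],
    [c'*\<i>, b'+a'*\<i>, d+g*\<i>, f+e*\<i>, 1, 0],
    [-b'+a'*\<i>, -c'*\<i>, -f+e*\<i>, d-g*\<i>, 0, 1]] ! i ! j"
  "Pmat a b c a' b' c' d e f g \<in> carrier_mat 6 6"
  by (auto simp: Pmat_def mat_of_rows_list_def)
lemma P_dim[simp]: "dim_row (Pmat a b c a' b' c' d e f g) = 6" "dim_col (Pmat a b c a' b' c' d e f g) = 6"
  by (auto simp: Pmat_def mat_of_rows_list_def)
lemma six: "(i::nat) < 6 \<Longrightarrow> i = 0 \<or> i = 1 \<or> i = 2 \<or> i = 3 \<or> i = 4 \<or> i = 5" by auto
lemma herm: "mat_adjoint (Pmat a b c a' b' c' d e f g) = Pmat a b c a' b' c' d e f g"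
  apply (rule eq_matI)
  apply (simp_all add: adj_idx P_idx)
  apply (auto simp: P_idx dest!: six)
  done

lemma Q_idx: "i < 6 \<Longrightarrow> j < 2 \<Longrightarrow> Qmat a b c a' b' c' $$ (i,j) = [
    [1, 0],
    [0, 1],
    [c*\<i>, b+a*\<i>],
    [-b+a*\<i>, -c*\<i>],
    [c'*\<i>, b'+a'*\<i>],
    [-b'+a'*\<i>, -c'*\<i>]] ! i ! j"
  "dim_row (Qmat a b c a' b' c') = 6" "dim_col (Qmat a b c a' b' c') = 2"
  by (auto simp: Qmat_def mat_of_rows_list_def)

lemma sum2[simp]: "(\<Sum>i::nat=0..<2. f i) = f 0 + (f 1::'a::comm_monoid_add)" by (simp add: numeral_2_eq_2)
lemma sum3[simp]: "(\<Sum>i::nat=0..<3. f i) = f 0 + f 1 + (f 2::'a::comm_monoid_add)"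
proof -
  have "{0..<3::nat} = {0,1,2}" by auto
  thus ?thesis by (simp add: add_ac)
qed

definition u1 :: "real \<Rightarrow> real \<Rightarrow> real \<Rightarrow> real \<Rightarrow> real \<Rightarrow> real \<Rightarrow> nat \<Rightarrow> complex" where
  "u1 a b c a' b' c' i = [1,0,c*\<i>, -b+a*\<i>, c'*\<i>, -b'+a'*\<i>] ! i"
definition u2 :: "real \<Rightarrow> real \<Rightarrow> real \<Rightarrow> real \<Rightarrow> real \<Rightarrow> real \<Rightarrow> nat \<Rightarrow> complex" where
  "u2 a b c a' b' c' i = [0,1,b+a*\<i>, -c*\<i>, b'+a'*\<i>, -c'*\<i>] ! i"
definition Rm :: "(nat \<Rightarrow> complex) \<Rightarrow> complex mat" where
  "Rm u = mat 6 6 (\<lambda>(r,c). u r * cnj (u c))"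

lemma Rm_carrier: "Rm u \<in> carrier_mat 6 6" by (simp add: Rm_def)

lemma QQ: "Qmat a b c a' b' c' * mat_adjoint (Qmat a b c a' b' c') = Rm (u1 a b c a' b' c') + Rm (u2 a b c a' b' c')"
  apply (rule eq_matI)
  apply (simp_all add: adj_idx Q_idx Rm_def)
  apply (auto simp: scalar_prod_def adj_idx Q_idx u1_def u2_def dest!: six)
  done

lemma PR: assumes "a^2 + b^2 + c^2 = 1 \<and> a'^2 + b'^2 + c'^2 = 1 \<and> d = a*a' + b*b' + c*c' \<and>
          e = b'*c - b*c' \<and> f = a*c' - a'*c \<and> g = a'*b - a*b'"
  shows "Pmat a b c a' b' c' d e f g = Rm (u1 a b c a' b' c') + Rm (u2 a b c a' b' c')"
  apply (rule eq_matI)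
  apply (simp_all add: P_idx Rm_def)
  using assms
  apply (auto simp: P_idx u1_def u2_def complex_eq_iff power2_eq_square algebra_simps dest!: six)
  done

lemma quad: assumes "x \<in> carrier_vec 6"
  shows "conjugate x \<bullet> (Rm u *\<^sub>v x) = complex_of_real (cmod (\<Sum>c<6. cnj (u c) * x $ c) ^ 2)"
proof -
  define s where "s = (\<Sum>c<6. cnj (u c) * x $ c)"
  have "(Rm u *\<^sub>v x) $ i = u i * s" if "i < 6" for i
    using that assms by (simp add: Rm_def s_def scalar_prod_def sum_distrib_left mult.assoc lessThan_atLeast0)
  hence "conjugate x \<bullet> (Rm u *\<^sub>v x) = (\<Sum>i<6. cnj (x $ i) * (u i * s))"
    using assms unfolding scalar_prod_def by (auto simp: Rm_def lessThan_atLeast0 intro!: sum.cong)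
  also have "\<dots> = cnj s * s"
    by (simp add: s_def sum_distrib_right mult_ac lessThan_atLeast0)
  also have "\<dots> = complex_of_real (cmod s ^ 2)" using complex_norm_square[of s] by (simp add: mult.commute)
  finally show ?thesis by (simp add: s_def)
qed

lemma rank_Rm: "vec_space.rank 6 (Rm u) \<le> 1"
  by (rule vec_space.rank_le_1_product_entries[OF Rm_carrier, of _ u "\<lambda>c. cnj (u c)"]) (simp add: Rm_def)

lemma det3: assumes "M \<in> carrier_mat 3 3" "M$$(0,0) = (1::'a::comm_ring_1)" "M$$(0,1) = 0" "M$$(1,0) = 0" "M$$(1,1) = 1"
  shows "det M = M$$(2,2) - M$$(2,0)*M$$(0,2) - M$$(2,1)*M$$(1,2)"
proof -
  define L where "L = mat 3 3 (\<lambda>(i,j). if i = j then 1 else if i = 2 \<and> j < 2 then M$$(2,j) else (0::'a))"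
  define U where "U = mat 3 3 (\<lambda>(i,j). if i = 2 then (if j = 2 then M$$(2,2) - M$$(2,0)*M$$(0,2) - M$$(2,1)*M$$(1,2) else 0) else M$$(i,j))"
  have three: "(i::nat) < 3 \<Longrightarrow> i = 0 \<or> i = 1 \<or> i = 2" for i by auto
  have "M = L * U"
    apply (rule eq_matI)
    using assms(1) apply (simp_all add: L_def U_def scalar_prod_def)
    using assms by (auto simp: algebra_simps dest!: three)
  moreover have "det L = 1"
    by (subst det_lower_triangular[of 3]) (auto simp: L_def diag_mat_def numeral_3_eq_3 upt_rec)
  moreover have "det U = M$$(2,2) - M$$(2,0)*M$$(0,2) - M$$(2,1)*M$$(1,2)"
    apply (subst det_upper_triangular[of _ 3])
    subgoal using assms(4) unfolding upper_triangular_def U_def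
      apply auto
      by (subgoal_tac "i = 1 \<and> j = 0") auto
    using assms by (auto simp: U_def diag_mat_def numeral_3_eq_3 upt_rec)
  moreover have "L \<in> carrier_mat 3 3" "U \<in> carrier_mat 3 3" by (auto simp: L_def U_def)
  ultimately show ?thesis using det_mult[of L 3 U] by simp
qed


lemma pick3: assumes "2 \<le> j"
  shows "pick {0,1,j} 0 = 0" "pick {0,1,j} 1 = 1" "pick {0,1,j} 2 = j"
proof -
  show p0: "pick {0,1,j} 0 = 0" by (simp add: Least_equality)
  show p1: "pick {0,1,j} 1 = 1" using p0 assms by (auto intro!: Least_equality)
  have "pick {0,1,j} (Suc 1) = j" unfolding pick.simps p1 using assms by (auto intro!: Least_equality)
  thus "pick {0,1,j} 2 = j" by (metis Suc_1)
qed

lemma minor3: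
  fixes A :: "complex mat"
  assumes A: "A \<in> carrier_mat 6 6" and j: "2 \<le> j" "j < 6" and k: "2 \<le> k" "k < 6"
    and e: "A$$(0,0) = 1" "A$$(0,1) = 0" "A$$(1,0) = 0" "A$$(1,1) = 1"
    and r: "vec_space.rank 6 A \<le> 2"
  shows "A$$(j,k) - A$$(j,0)*A$$(0,k) - A$$(j,1)*A$$(1,k) = 0"
proof (rule ccontr)
  assume ne: "A$$(j,k) - A$$(j,0)*A$$(0,k) - A$$(j,1)*A$$(1,k) \<noteq> 0"
  have sI: "{i. i < 6 \<and> i \<in> {0,1,j}} = {0,1,j}" using j by auto
  have sJ: "{i. i < 6 \<and> i \<in> {0,1,k}} = {0,1,k}" using k by auto
  have cI: "card {0,1,j} = 3" using j by simp
  have cJ: "card {0,1,k} = 3" using k by simp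
  define M where "M = submatrix A {0,1,j} {0,1,k}"
  have M: "M \<in> carrier_mat 3 3" using A sI sJ cI cJ by (simp add: M_def submatrix_def)
  have Mi: "M $$ (x,y) = A $$ (pick {0,1,j} x, pick {0,1,k} y)" if "x < 3" "y < 3" for x y
    using that A sI sJ cI cJ by (simp add: M_def submatrix_def)
  have "det M = A$$(j,k) - A$$(j,0)*A$$(0,k) - A$$(j,1)*A$$(1,k)"
    by (subst det3[OF M]) (simp_all add: Mi pick3[OF j(1), unfolded One_nat_def] pick3[OF k(1), unfolded One_nat_def] e[unfolded One_nat_def] del: pick.simps)
  hence "det M \<noteq> 0" using ne by simp
  from vec_space.rank_gt_minor[OF A this[unfolded M_def]]
  have "3 \<le> vec_space.rank 6 A" using sJ cJ by simp
  thus False using r by simp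
qed

lemma rank_ge2:
  fixes A :: "complex mat"
  assumes A: "A \<in> carrier_mat 6 6"
    and e: "A$$(0,0) = 1" "A$$(0,1) = 0" "A$$(1,0) = 0" "A$$(1,1) = 1"
  shows "2 \<le> vec_space.rank 6 A"
proof -
  have sI: "{i. i < 6 \<and> i \<in> {0,1::nat}} = {0,1}" by auto
  have p0: "pick {0,1} 0 = 0" by (simp add: Least_equality)
  have p1: "pick {0,1} (Suc 0) = Suc 0" unfolding pick.simps p0 by (auto intro!: Least_equality)
  have "submatrix A {0,1} {0,1} = 1\<^sub>m 2"
  proof (rule eq_matI)
    fix i j assume "i < dim_row (1\<^sub>m 2)" "j < dim_col (1\<^sub>m 2)"
    hence ij: "i = 0 \<or> i = Suc 0" "j = 0 \<or> j = Suc 0" by auto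
    have "submatrix A {0,1} {0,1} $$ (i,j) = A $$ (pick {0,1} i, pick {0,1} j)"
      using A sI \<open>i < dim_row (1\<^sub>m 2)\<close> \<open>j < dim_col (1\<^sub>m 2)\<close>
      unfolding submatrix_def by (subst index_mat) auto
    thus "submatrix A {0,1} {0,1} $$ (i,j) = 1\<^sub>m 2 $$ (i,j)"
      using ij e[unfolded One_nat_def] p0 p1
      by (elim disjE) (simp_all del: pick.simps)
  qed (use A sI in \<open>auto simp: submatrix_def\<close>)
  hence "det (submatrix A {0,1} {0,1}) \<noteq> 0" by simp
  from vec_space.rank_gt_minor[OF A this] show ?thesis using sI by simp
qed


theorem mainTheorem3:
  fixes a b c a' b' c' d e f g :: real
  shows "((psd_mat (Pmat a b c a' b' c' d e f g) \<and> vec_space.rank 6 (Pmat a b c a' b' c' d e f g) = 2)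
     \<longleftrightarrow> (a^2 + b^2 + c^2 = 1 \<and> a'^2 + b'^2 + c'^2 = 1 \<and> d = a*a' + b*b' + c*c' \<and>
          e = b'*c - b*c' \<and> f = a*c' - a'*c \<and> g = a'*b - a*b'))
   \<and> ((psd_mat (Pmat a b c a' b' c' d e f g) \<and> vec_space.rank 6 (Pmat a b c a' b' c' d e f g) = 2)
     \<longrightarrow> Pmat a b c a' b' c' d e f g = Qmat a b c a' b' c' * mat_adjoint (Qmat a b c a' b' c'))"
proof -
  define P where "P = Pmat a b c a' b' c' d e f g"
  define R1 where "R1 = Rm (u1 a b c a' b' c')"
  define R2 where "R2 = Rm (u2 a b c a' b' c')"
  have PC: "P \<in> carrier_mat 6 6" using P_idx(2) by (simp add: P_def)
  have R1C: "R1 \<in> carrier_mat 6 6" and R2C: "R2 \<in> carrier_mat 6 6" by (simp_all add: R1_def R2_def Rm_carrier)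
  have e00: "P$$(0,0) = 1" "P$$(0,1) = 0" "P$$(1,0) = 0" "P$$(1,1) = 1" by (simp_all add: P_def P_idx)
  let ?cond = "a^2 + b^2 + c^2 = 1 \<and> a'^2 + b'^2 + c'^2 = 1 \<and> d = a*a' + b*b' + c*c' \<and>
          e = b'*c - b*c' \<and> f = a*c' - a'*c \<and> g = a'*b - a*b'"
  have fwd: "psd_mat P \<and> vec_space.rank 6 P = 2" if cond: ?cond
  proof -
    have PRR: "P = R1 + R2" using PR[OF cond] by (simp add: P_def R1_def R2_def)
    have "conjugate x \<bullet> (P *\<^sub>v x) \<ge> 0" if x: "x \<in> carrier_vec 6" for x
    proof -
      have "conjugate x \<bullet> (P *\<^sub>v x) = conjugate x \<bullet> (R1 *\<^sub>v x) + conjugate x \<bullet> (R2 *\<^sub>v x)"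
        unfolding PRR using R1C R2C x
        by (simp add: add_mult_distrib_mat_vec[OF R1C R2C x] scalar_prod_add_distrib[of _ 6])
      also have "\<dots> \<ge> 0" unfolding R1_def R2_def quad[OF x] by (simp add: less_eq_complex_def)
      finally show ?thesis .
    qed
    hence psd: "psd_mat P" unfolding psd_mat_def using PC herm by (simp add: P_def)
    have "vec_space.rank 6 P \<le> vec_space.rank 6 R1 + vec_space.rank 6 R2"
      unfolding PRR by (rule vec_space.rank_subadditive[OF R1C R2C])
    also have "\<dots> \<le> 2" using rank_Rm unfolding R1_def R2_def
      by (metis add_mono one_add_one)
    finally have "vec_space.rank 6 P \<le> 2" .
    moreover have "2 \<le> vec_space.rank 6 P" by (rule rank_ge2[OF PC e00])
    ultimately show ?thesis using psd by simp
  qed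
  have bwd: ?cond if r: "vec_space.rank 6 P = 2"
  proof -
    have m: "P$$(j,k) - P$$(j,0)*P$$(0,k) - P$$(j,1)*P$$(1,k) = 0" if "2 \<le> j" "j < 6" "2 \<le> k" "k < 6" for j k
      by (rule minor3[OF PC that e00]) (simp add: r)
    have "P$$(2,2) - P$$(2,0)*P$$(0,2) - P$$(2,1)*P$$(1,2) = 0" using m[of 2 2] by simp
    hence "1 - (c*\<i>)*(-c*\<i>) - (b+a*\<i>)*(b-a*\<i>) = 0" by (simp add: P_def P_idx)
    hence "Re (1 - (c*\<i>)*(-c*\<i>) - (b+a*\<i>)*(b-a*\<i>)) = 0" by simp
    hence h1: "a^2 + b^2 + c^2 = 1" by (simp add: power2_eq_square)
    have "P$$(4,4) - P$$(4,0)*P$$(0,4) - P$$(4,1)*P$$(1,4) = 0" using m[of 4 4] by simp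
    hence "1 - (c'*\<i>)*(-c'*\<i>) - (b'+a'*\<i>)*(b'-a'*\<i>) = 0" by (simp add: P_def P_idx)
    hence "Re (1 - (c'*\<i>)*(-c'*\<i>) - (b'+a'*\<i>)*(b'-a'*\<i>)) = 0" by simp
    hence h2: "a'^2 + b'^2 + c'^2 = 1" by (simp add: power2_eq_square)
    have "P$$(2,4) - P$$(2,0)*P$$(0,4) - P$$(2,1)*P$$(1,4) = 0" using m[of 2 4] by simp
    hence z3: "(d - g*\<i>) - (c*\<i>)*(-c'*\<i>) - (b+a*\<i>)*(b'-a'*\<i>) = 0" by (simp add: P_def P_idx)
    hence "Re ((d - g*\<i>) - (c*\<i>)*(-c'*\<i>) - (b+a*\<i>)*(b'-a'*\<i>)) = 0" by simp
    moreover have "Im ((d - g*\<i>) - (c*\<i>)*(-c'*\<i>) - (b+a*\<i>)*(b'-a'*\<i>)) = 0" using z3 by simp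
    ultimately have h3: "d = a*a' + b*b' + c*c' \<and> g = a'*b - a*b'" by (simp add: algebra_simps)
    have "P$$(2,5) - P$$(2,0)*P$$(0,5) - P$$(2,1)*P$$(1,5) = 0" using m[of 2 5] by simp
    hence z4: "(-f - e*\<i>) - (c*\<i>)*(-b'-a'*\<i>) - (b+a*\<i>)*(c'*\<i>) = 0" by (simp add: P_def P_idx)
    hence "Re ((-f - e*\<i>) - (c*\<i>)*(-b'-a'*\<i>) - (b+a*\<i>)*(c'*\<i>)) = 0" by simp
    moreover have "Im ((-f - e*\<i>) - (c*\<i>)*(-b'-a'*\<i>) - (b+a*\<i>)*(c'*\<i>)) = 0" using z4 by simp
    ultimately have h4: "e = b'*c - b*c' \<and> f = a*c' - a'*c" by (simp add: algebra_simps)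
    show ?thesis using h1 h2 h3 h4 by simp
  qed
  have "P = Qmat a b c a' b' c' * mat_adjoint (Qmat a b c a' b' c')" if ?cond
    using PR[OF that] QQ by (simp add: P_def)
  thus ?thesis using fwd bwd unfolding P_def by blast
qed

end
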